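(* Let $D\ge 1$, and let $\mathbf{x}\sim\mathcal{N}(\boldsymbol{\mu}_x,\operatorname{diag}(\boldsymbol{\sigma}_x^2))$ and $\mathbf{y}\sim\mathcal{N}(\boldsymbol{\mu}_y,\operatorname{diag}(\boldsymbol{\sigma}_y^2))$ be independent Gaussian random vectors in $\mathbb{R}^D$, with $\boldsymbol{\mu}_x,\boldsymbol{\mu}_y\in\mathbb{R}^D$ and $\boldsymbol{\sigma}_x,\boldsymbol{\sigma}_y\in(0,\infty)^D$. Define the normalized vectors $\tilde{\mathbf{x}}=(\mathbf{x}-\boldsymbol{\mu}_x)/\boldsymbol{\sigma}_x$ and $\tilde{\mathbf{y}}=(\mathbf{y}-\boldsymbol{\mu}_y)/\boldsymbol{\sigma}_y$ (entrywise division). Suppose that \[ 12\left(\sqrt{(\boldsymbol{\sigma}_x^2)^\top\boldsymbol{\sigma}_y^2}+\|\boldsymbol{\sigma}_x\circ\boldsymbol{\sigma}_y\|_\infty\right)+5\left(\sqrt{(\boldsymbol{\sigma}_y^2)^\top\boldsymbol{\mu}_x^2}+\sqrt{(\boldsymbol{\sigma}_x^2)^\top\boldsymbol{\mu}_y^2}+\|\boldsymbol{\sigma}_y\circ|\boldsymbol{\mu}_x|\|_\infty+\|\boldsymbol{\sigma}_x\circ|\boldsymbol{\mu}_y|\|_\infty\right)\le|\boldsymbol{\mu}_x^\top\boldsymbol{\mu}_y|. \] Then \[ \Pr\left(\operatorname{sign}(\mathbf{x}^\top\mathbf{y})\neq\operatorname{sign}(\tilde{\mathbf{x}}^\top\tilde{\mathbf{y}})\right)\ge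 0.4 . \]
   Context: Squares $\boldsymbol{\sigma}^2,\boldsymbol{\mu}^2$, absolute values $|\boldsymbol{\mu}|$ and divisions of vectors are taken entrywise; $\circ$ denotes the entrywise (Hadamard) product and $\|\cdot\|_\infty$ the maximum absolute entry. *)

theory Defs
  imports "HOL-Probability.Probability"
begin

abbreviation vec_space :: "nat \<Rightarrow> (nat \<Rightarrow> real) measure" where
  "vec_space D \<equiv> PiM {..<D} (\<lambda>_. borel)"

definition diag_gaussian :: "nat \<Rightarrow> (nat \<Rightarrow> real) \<Rightarrow> (nat \<Rightarrow> real) \<Rightarrow> (nat \<Rightarrow> real) measure" where
  "diag_gaussian D mu sd = PiM {..<D} (\<lambda>i. density lborel (normal_density (mu i) (sd i)))"

definition sup_norm :: "nat \<Rightarrow> (nat \<Rightarrow> real) \<Rightarrow> real" where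
  "sup_norm D v = Max ((\<lambda>i. \<bar>v i\<bar>) ` {..<D})"

end

theory Submission imports Defs begin

lemma nd_int1:
  assumes "0 < (s::real)"
  shows "integrable (density lborel (normal_density m s)) (\<lambda>x. x)"
    and "integral\<^sup>L (density lborel (normal_density m s)) (\<lambda>x. x) = m"
proof -
  show "integrable (density lborel (normal_density m s)) (\<lambda>x. x)"
    by (subst integrable_density) (auto simp: integrable_normal_moment_nz_1[OF assms])
  show "integral\<^sup>L (density lborel (normal_density m s)) (\<lambda>x. x) = m"
    by (subst integral_density) (auto simp: integral_normal_moment_nz_1[OF assms])
qed

lemma nd_int2:
  assumes "0 < (s::real)"
  shows "integrable (density lborel (normal_density m s)) (\<lambda>x. x^2)"
    and "integral\<^sup>L (density lborel (normal_density m s)) (\<lambda>x. x^2) = s^2 + m^2"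
proof -
  have e: "\<And>x. normal_density m s x * x^2 = normal_density m s x * (x - m)^2 + 2 * m * (normal_density m s x * x) - m^2 * normal_density m s x"
    by (simp add: algebra_simps power2_eq_square)
  have i1: "integrable lborel (\<lambda>x. normal_density m s x * (x - m)^2)"
    using integrable_normal_moment[OF assms, of m 2] by simp
  have i2: "integrable lborel (\<lambda>x. normal_density m s x * x)"
    by (rule integrable_normal_moment_nz_1[OF assms])
  have i3: "integrable lborel (\<lambda>x. normal_density m s x * x^2)"
    unfolding e using i1 i2 integrable_normal_density[OF assms, of m] by (intro Bochner_Integration.integrable_diff Bochner_Integration.integrable_add integrable_mult_right) auto
  show "integrable (density lborel (normal_density m s)) (\<lambda>x. x^2)"
    by (subst integrable_density) (auto simp: i3)
  have v: "integral\<^sup>L lborel (\<lambda>x. normal_density m s x * (x - m)^2) = s^2"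
    using integral_normal_moment_even[OF assms, of m 1] by (simp add: power2_eq_square)
  have "integral\<^sup>L lborel (\<lambda>x. normal_density m s x * x^2) = s^2 + m^2"
    unfolding e using i1 i2 integrable_normal_density[OF assms, of m]
    apply (subst Bochner_Integration.integral_diff)
      apply (auto intro!: Bochner_Integration.integrable_add integrable_mult_right)[2]
    apply (subst Bochner_Integration.integral_add)
      apply (auto intro!: integrable_mult_right)[2]
    apply (simp add: v integral_normal_moment_nz_1[OF assms, of m] integral_normal_density[OF assms])
    apply (simp add: power2_eq_square)
    done
  then show "integral\<^sup>L (density lborel (normal_density m s)) (\<lambda>x. x^2) = s^2 + m^2"
    by (subst integral_density) auto
qed

lemma nd_refl:
  assumes "0 < (s::real)"
  shows "distr (density lborel (normal_density m s)) borel (\<lambda>x. 2*m - x) = density lborel (normal_density m s)"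
proof -
  interpret N: prob_space "density lborel (normal_density m s)"
    using prob_space_normal_density[OF assms] .
  have d: "distributed (density lborel (normal_density m s)) lborel (\<lambda>x. x) (normal_density m s)"
    unfolding distributed_def by (auto simp: distr_id2)
  have "distributed (density lborel (normal_density m s)) lborel (\<lambda>x. 2*m + (-1) * x) (normal_density (2*m + (-1)*m) (\<bar>-1\<bar> * s))"
    by (rule N.normal_density_affine[OF d assms]) simp
  then have "distr (density lborel (normal_density m s)) lborel (\<lambda>x. 2*m - x) = density lborel (normal_density m s)"
    unfolding distributed_def by simp
  then show ?thesis
    by (metis distr_cong sets_lborel space_lborel space_borel)
qed

lemma pps: "(\<And>i. 0 < sd i) \<Longrightarrow> product_prob_space (\<lambda>i. density lborel (normal_density (mu i) (sd i)))"
  unfolding product_prob_space_def product_prob_space_axioms_def product_sigma_finite_def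
  by (auto simp: prob_space_normal_density prob_space_imp_sigma_finite)

lemma prod_one_idx:
  assumes "finite I" "i \<in> I"
  shows "(\<Prod>k\<in>I. (if k = i then g else (\<lambda>_. 1::real)) (x k)) = g (x i)"
  using assms by (simp add: prod.remove[OF assms])

lemma prod_two_idx:
  assumes "finite I" "i \<in> I" "j \<in> I" "i \<noteq> j"
  shows "(\<Prod>k\<in>I. (if k = i then (\<lambda>t. t) else if k = j then (\<lambda>t. t) else (\<lambda>_. 1::real)) (x k)) = x i * x j"
proof -
  have "(\<Prod>k\<in>I. (if k = i then (\<lambda>t. t) else if k = j then (\<lambda>t. t) else (\<lambda>_. 1::real)) (x k))
     = x i * (\<Prod>k\<in>I-{i}. (if k = i then (\<lambda>t. t) else if k = j then (\<lambda>t. t) else (\<lambda>_. 1::real)) (x k))"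
    by (simp add: prod.remove[OF assms(1,2)])
  also have "(\<Prod>k\<in>I-{i}. (if k = i then (\<lambda>t. t) else if k = j then (\<lambda>t. t) else (\<lambda>_. 1::real)) (x k))
     = x j * (\<Prod>k\<in>I-{i}-{j}. (if k = i then (\<lambda>t. t) else if k = j then (\<lambda>t. t) else (\<lambda>_. 1::real)) (x k))"
    using assms by (subst prod.remove[of _ j]) auto
  finally show ?thesis by simp
qed

lemma pim_mom:
  assumes sd: "\<And>i. 0 < sd i" and i: "i < D" and j: "j < D"
  shows "integrable (diag_gaussian D mu sd) (\<lambda>x. x i * x j)"
    and "integral\<^sup>L (diag_gaussian D mu sd) (\<lambda>x. x i * x j) = (if i = j then sd i^2 + mu i^2 else mu i * mu j)"
    and "integrable (diag_gaussian D mu sd) (\<lambda>x. x i)"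
    and "integral\<^sup>L (diag_gaussian D mu sd) (\<lambda>x. x i) = mu i"
proof -
  let ?N = "\<lambda>i. density lborel (normal_density (mu i) (sd i))"
  interpret product_prob_space ?N using pps[OF sd] .
  have pN: "\<And>k. prob_space (?N k)" using prob_space_normal_density sd by blast
  have c1: "integral\<^sup>L (?N k) (\<lambda>_. 1::real) = 1" for k
    using M.prob_space[of k] by simp
  have pu: "M.prob k UNIV = 1" for k
    using M.prob_space[of k] by simp
  have ic1: "\<And>k. integrable (?N k) (\<lambda>_. 1::real)"
    using pN by (simp add: finite_measure.integrable_const prob_space_def)
  have fin: "finite {..<D}" by simp
  define f1 where "f1 = (\<lambda>k::nat. if k = i then (\<lambda>t. t) else (\<lambda>_. 1::real))"
  have e1: "\<And>x. (\<Prod>k\<in>{..<D}. f1 k (x k)) = x i"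
    unfolding f1_def using prod_one_idx[OF fin, of i "\<lambda>t. t"] i by simp
  have if1: "\<And>k. integrable (?N k) (f1 k)"
    unfolding f1_def using nd_int1(1)[OF sd] ic1 by auto
  show "integrable (diag_gaussian D mu sd) (\<lambda>x. x i)"
    using product_integrable_prod[OF fin if1] unfolding e1 diag_gaussian_def .
  have "integral\<^sup>L (diag_gaussian D mu sd) (\<lambda>x. x i) = (\<Prod>k\<in>{..<D}. integral\<^sup>L (?N k) (f1 k))"
    using product_integral_prod[OF fin if1] unfolding e1 diag_gaussian_def .
  also have "\<dots> = mu i"
    using i
    by (simp add: pu prod.delta f1_def if_distrib c1 nd_int1(2)[OF sd] cong: if_cong)
  finally show "integral\<^sup>L (diag_gaussian D mu sd) (\<lambda>x. x i) = mu i" .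
  have "integrable (diag_gaussian D mu sd) (\<lambda>x. x i * x j) \<and>
        integral\<^sup>L (diag_gaussian D mu sd) (\<lambda>x. x i * x j) = (if i = j then sd i^2 + mu i^2 else mu i * mu j)"
  proof (cases "i = j")
    case True
    define f2 where "f2 = (\<lambda>k::nat. if k = i then (\<lambda>t. t^2) else (\<lambda>_. 1::real))"
    have e2: "\<And>x. (\<Prod>k\<in>{..<D}. f2 k (x k)) = x i * x j"
      unfolding f2_def using prod_one_idx[OF fin, of i "\<lambda>t. t^2"] i True by (simp add: power2_eq_square)
    have if2: "\<And>k. integrable (?N k) (f2 k)"
      unfolding f2_def using nd_int2(1)[OF sd] ic1 by auto
    have "integral\<^sup>L (diag_gaussian D mu sd) (\<lambda>x. x i * x j) = (\<Prod>k\<in>{..<D}. integral\<^sup>L (?N k) (f2 k))"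
      using product_integral_prod[OF fin if2] unfolding e2 diag_gaussian_def .
    also have "\<dots> = sd i^2 + mu i^2"
      using i
      by (simp add: pu prod.delta f2_def if_distrib c1 nd_int2(2)[OF sd] cong: if_cong)
    finally show ?thesis
      using product_integrable_prod[OF fin if2] True unfolding e2 diag_gaussian_def by simp
  next
    case False
    define f2 where "f2 = (\<lambda>k::nat. if k = i then (\<lambda>t. t) else if k = j then (\<lambda>t. t) else (\<lambda>_. 1::real))"
    have e2: "\<And>x. (\<Prod>k\<in>{..<D}. f2 k (x k)) = x i * x j"
      unfolding f2_def using prod_two_idx[OF fin] i j False by simp
    have if2: "\<And>k. integrable (?N k) (f2 k)"
      unfolding f2_def using nd_int1(1)[OF sd] ic1 by auto
    have "integral\<^sup>L (diag_gaussian D mu sd) (\<lambda>x. x i * x j) = (\<Prod>k\<in>{..<D}. integral\<^sup>L (?N k) (f2 k))"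
      using product_integral_prod[OF fin if2] unfolding e2 diag_gaussian_def .
    also have "\<dots> = mu i * mu j"
    proof -
      have g: "integral\<^sup>L (?N k) (f2 k) = (if k = i then (\<lambda>t. t) else if k = j then (\<lambda>t. t) else (\<lambda>_. 1::real)) (mu k)" for k
        unfolding f2_def using c1 nd_int1(2)[OF sd] by auto
      show ?thesis unfolding g using prod_two_idx[OF fin, of i j mu] i j False by simp
    qed
    finally show ?thesis
      using product_integrable_prod[OF fin if2] False unfolding e2 diag_gaussian_def by simp
  qed
  then show "integrable (diag_gaussian D mu sd) (\<lambda>x. x i * x j)"
    and "integral\<^sup>L (diag_gaussian D mu sd) (\<lambda>x. x i * x j) = (if i = j then sd i^2 + mu i^2 else mu i * mu j)"
    by auto
qed

lemma pim_refl:
  assumes sd: "\<And>i. 0 < sd i"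
  shows "distr (diag_gaussian D mu sd) (vec_space D) (\<lambda>x. \<lambda>i\<in>{..<D}. 2*mu i - x i) = diag_gaussian D mu sd"
proof -
  let ?N = "\<lambda>i. density lborel (normal_density (mu i) (sd i))"
  interpret product_prob_space ?N using pps[OF sd] .
  have fin: "finite {..<D}" by simp
  have sN: "sets (PiM {..<D} ?N) = sets (vec_space D)"
    by (rule sets_PiM_cong) auto
  have rm: "(\<lambda>x. \<lambda>i\<in>{..<D}. 2*mu i - x i) \<in> measurable (PiM {..<D} ?N) (vec_space D)"
    by (subst measurable_cong_sets[OF sN refl]) measurable
  show ?thesis unfolding diag_gaussian_def
  proof (rule PiM_eqI[OF fin])
    show "sets (distr (PiM {..<D} ?N) (vec_space D) (\<lambda>x. \<lambda>i\<in>{..<D}. 2*mu i - x i)) = sets (PiM {..<D} ?N)"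
      using sN by simp
    fix A assume A: "\<And>i. i \<in> {..<D} \<Longrightarrow> A i \<in> sets (?N i)"
    have Ab: "\<And>i. i \<in> {..<D} \<Longrightarrow> A i \<in> sets borel" using A by simp
    have PA: "Pi\<^sub>E {..<D} A \<in> sets (vec_space D)"
      using Ab by (intro sets_PiM_I_finite) auto
    define B where "B = (\<lambda>i. (\<lambda>t. 2 * mu i - t) -` A i)"
    have Bb: "\<And>i. i \<in> {..<D} \<Longrightarrow> B i \<in> sets (?N i)"
    proof -
      fix i assume "i \<in> {..<D}"
      then have "A i \<in> sets borel" using Ab by blast
      moreover have "(\<lambda>t::real. 2 * mu i - t) \<in> borel_measurable borel" by measurable
      ultimately have "(\<lambda>t::real. 2 * mu i - t) -` A i \<inter> space borel \<in> sets borel"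
        by (rule measurable_sets[rotated])
      then show "B i \<in> sets (?N i)" unfolding B_def by simp
    qed
    have pre: "(\<lambda>x. \<lambda>i\<in>{..<D}. 2*mu i - x i) -` Pi\<^sub>E {..<D} A \<inter> space (PiM {..<D} ?N) = Pi\<^sub>E {..<D} B"
      unfolding B_def by (auto simp: space_PiM PiE_iff)
    have "emeasure (distr (PiM {..<D} ?N) (vec_space D) (\<lambda>x. \<lambda>i\<in>{..<D}. 2*mu i - x i)) (Pi\<^sub>E {..<D} A)
        = emeasure (PiM {..<D} ?N) (Pi\<^sub>E {..<D} B)"
      using emeasure_distr[OF rm PA] pre by simp
    also have "\<dots> = (\<Prod>i\<in>{..<D}. emeasure (?N i) (B i))"
      using Bb by (intro emeasure_PiM[OF fin]) auto
    also have "\<dots> = (\<Prod>i\<in>{..<D}. emeasure (?N i) (A i))"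
    proof (rule prod.cong[OF refl])
      fix i assume i: "i \<in> {..<D}"
      have m: "(\<lambda>t::real. 2 * mu i - t) \<in> measurable (?N i) borel" by simp
      have "emeasure (?N i) (A i) = emeasure (distr (?N i) borel (\<lambda>t. 2 * mu i - t)) (A i)"
        using nd_refl[OF sd, of "mu i"] by simp
      also have "\<dots> = emeasure (?N i) (B i)"
        using emeasure_distr[OF m Ab[OF i]] unfolding B_def by simp
      finally show "emeasure (?N i) (B i) = emeasure (?N i) (A i)" by simp
    qed
    finally show "emeasure (distr (PiM {..<D} ?N) (vec_space D) (\<lambda>x. \<lambda>i\<in>{..<D}. 2*mu i - x i)) (Pi\<^sub>E {..<D} A)
        = (\<Prod>i\<in>{..<D}. emeasure (?N i) (A i))" .
  qed
qed

lemma sup_norm_nonneg: "D \<ge> 1 \<Longrightarrow> 0 \<le> sup_norm D v"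
  unfolding sup_norm_def
  by (rule order_trans[OF abs_ge_zero[of "v 0"]]) (rule Max_ge, auto)

theorem mainTheorem1:
  fixes M :: "'a measure" and D :: nat
    and X Y :: "'a \<Rightarrow> nat \<Rightarrow> real"
    and mux muy sx sy :: "nat \<Rightarrow> real"
  assumes "prob_space M"
    and "D \<ge> 1"
    and "\<And>i. i < D \<Longrightarrow> sx i > 0"
    and "\<And>i. i < D \<Longrightarrow> sy i > 0"
    and "X \<in> measurable M (vec_space D)"
    and "Y \<in> measurable M (vec_space D)"
    and "distr M (vec_space D) X = diag_gaussian D mux sx"
    and "distr M (vec_space D) Y = diag_gaussian D muy sy"
    and "prob_space.indep_var M (vec_space D) X (vec_space D) Y"
    and "12 * (sqrt (\<Sum>i<D. (sx i)\<^sup>2 * (sy i)\<^sup>2) + sup_norm D (\<lambda>i. sx i * sy i))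
         + 5 * (sqrt (\<Sum>i<D. (sy i)\<^sup>2 * (mux i)\<^sup>2) + sqrt (\<Sum>i<D. (sx i)\<^sup>2 * (muy i)\<^sup>2)
                + sup_norm D (\<lambda>i. sy i * \<bar>mux i\<bar>) + sup_norm D (\<lambda>i. sx i * \<bar>muy i\<bar>))
         \<le> \<bar>\<Sum>i<D. mux i * muy i\<bar>"
  shows "measure M {\<omega> \<in> space M.
            sgn (\<Sum>i<D. X \<omega> i * Y \<omega> i)
            \<noteq> sgn (\<Sum>i<D. ((X \<omega> i - mux i) / sx i) * ((Y \<omega> i - muy i) / sy i))} \<ge> 0.4"
proof -
  interpret prob_space M by fact
  note Xm[measurable] = assms(5) and Ym[measurable] = assms(6)
  define sx' where "sx' = (\<lambda>i. if i < D then sx i else 1)"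
  define sy' where "sy' = (\<lambda>i. if i < D then sy i else 1)"
  have sx'p: "\<And>i. 0 < sx' i" unfolding sx'_def using assms(3) by auto
  have sy'p: "\<And>i. 0 < sy' i" unfolding sy'_def using assms(4) by auto
  have dX: "distr M (vec_space D) X = diag_gaussian D mux sx'"
    unfolding assms(7) diag_gaussian_def by (rule PiM_cong) (auto simp: sx'_def)
  have dY: "distr M (vec_space D) Y = diag_gaussian D muy sy'"
    unfolding assms(8) diag_gaussian_def by (rule PiM_cong) (auto simp: sy'_def)
  define m where "m = (\<Sum>i<D. mux i * muy i)"
  define a where "a = sqrt (\<Sum>i<D. (sx i)\<^sup>2 * (sy i)\<^sup>2)"
  define b where "b = sqrt (\<Sum>i<D. (sy i)\<^sup>2 * (mux i)\<^sup>2)"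
  define c where "c = sqrt (\<Sum>i<D. (sx i)\<^sup>2 * (muy i)\<^sup>2)"
  define V where "V = (\<Sum>i<D. (sx i)\<^sup>2 * (sy i)\<^sup>2 + (sy i)\<^sup>2 * (mux i)\<^sup>2 + (sx i)\<^sup>2 * (muy i)\<^sup>2)"
  have apos: "0 < a"
    unfolding a_def
  proof (intro real_sqrt_gt_zero sum_pos)
    show "{..<D} \<noteq> {}" using assms(2) by (metis lessThan_empty_iff not_one_le_zero)
    fix i assume "i \<in> {..<D}"
    then have "0 < sx i" "0 < sy i" using assms(3,4) by auto
    then show "0 < (sx i)\<^sup>2 * (sy i)\<^sup>2" by simp
  qed simp
  have b0: "0 \<le> b" "0 \<le> c" unfolding b_def c_def by (auto intro!: sum_nonneg)
  have hyp: "5 * (a + b + c) \<le> \<bar>m\<bar>"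
    using assms(10) sup_norm_nonneg[OF assms(2)] apos b0 unfolding a_def b_def c_def m_def
    by (smt (verit) sup_norm_nonneg[OF assms(2)])
  have mne: "m \<noteq> 0" using hyp apos b0 by auto
  have Vabc: "V = a^2 + b^2 + c^2"
    unfolding V_def a_def b_def c_def by (simp add: sum.distrib sum_nonneg)
  have Vle: "V / m^2 \<le> 1/25"
  proof -
    have "(5 * (a + b + c))^2 \<le> m^2"
      using hyp apos b0 by (metis abs_le_square_iff abs_of_nonneg add_nonneg_nonneg less_imp_le mult_nonneg_nonneg zero_le_numeral)
    moreover have "V \<le> (a+b+c)^2" unfolding Vabc using apos b0 by (simp add: power2_eq_square algebra_simps)
    moreover have "(5*(a+b+c))^2 = 25*(a+b+c)^2" by (simp add: power2_eq_square algebra_simps)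
    ultimately have "25 * V \<le> m^2" by linarith
    then show ?thesis using mne by (simp add: field_simps)
  qed

  have intX: "integrable M (\<lambda>\<omega>. f (X \<omega>)) \<longleftrightarrow> integrable (diag_gaussian D mux sx') f"
    and EX: "(\<integral>\<omega>. f (X \<omega>) \<partial>M) = integral\<^sup>L (diag_gaussian D mux sx') f"
    if "f \<in> borel_measurable (vec_space D)" for f :: "(nat \<Rightarrow> real) \<Rightarrow> real"
    using integrable_distr_eq[OF Xm that] integral_distr[OF Xm that] dX by simp_all
  have intY: "integrable M (\<lambda>\<omega>. f (Y \<omega>)) \<longleftrightarrow> integrable (diag_gaussian D muy sy') f"
    and EY: "(\<integral>\<omega>. f (Y \<omega>) \<partial>M) = integral\<^sup>L (diag_gaussian D muy sy') f"
    if "f \<in> borel_measurable (vec_space D)" for f :: "(nat \<Rightarrow> real) \<Rightarrow> real"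
    using integrable_distr_eq[OF Ym that] integral_distr[OF Ym that] dY by simp_all
  have indep_prod: "integrable M (\<lambda>\<omega>. f (X \<omega>) * g (Y \<omega>)) \<and>
      (\<integral>\<omega>. f (X \<omega>) * g (Y \<omega>) \<partial>M) = (\<integral>\<omega>. f (X \<omega>) \<partial>M) * (\<integral>\<omega>. g (Y \<omega>) \<partial>M)"
    if fm: "f \<in> borel_measurable (vec_space D)" and gm: "g \<in> borel_measurable (vec_space D)"
      and fi: "integrable M (\<lambda>\<omega>. f (X \<omega>))" and gi: "integrable M (\<lambda>\<omega>. g (Y \<omega>))"
    for f g :: "(nat \<Rightarrow> real) \<Rightarrow> real"
  proof -
    have iv: "indep_var borel (f \<circ> X) borel (g \<circ> Y)"
      by (rule indep_var_compose[OF assms(9) fm gm])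
    have fi': "integrable M (f \<circ> X)" "integrable M (g \<circ> Y)" using fi gi by (simp_all add: comp_def)
    show ?thesis
      using indep_var_integrable[OF iv fi'] indep_var_lebesgue_integral[OF iv fi'] by (simp add: comp_def)
  qed
  have cm1: "(\<lambda>x. x i) \<in> borel_measurable (vec_space D)" if "i < D" for i
    using that by (intro measurable_component_singleton) auto
  have cm2: "(\<lambda>x. x i * x j) \<in> borel_measurable (vec_space D)" if "i < D" "j < D" for i j
    using cm1[OF that(1)] cm1[OF that(2)] by (rule borel_measurable_times)
  define EXX where "EXX i j = (if i = j then sx i^2 + mux i^2 else mux i * mux j)" for i j
  define EYY where "EYY i j = (if i = j then sy i^2 + muy i^2 else muy i * muy j)" for i j
  have mXX: "integrable M (\<lambda>\<omega>. X \<omega> i * X \<omega> j) \<and> (\<integral>\<omega>. X \<omega> i * X \<omega> j \<partial>M) = EXX i j"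
    if "i < D" "j < D" for i j
    using intX[OF cm2[OF that]] EX[OF cm2[OF that]] pim_mom(1,2)[OF sx'p that] that
    by (simp add: EXX_def sx'_def)
  have mYY: "integrable M (\<lambda>\<omega>. Y \<omega> i * Y \<omega> j) \<and> (\<integral>\<omega>. Y \<omega> i * Y \<omega> j \<partial>M) = EYY i j"
    if "i < D" "j < D" for i j
    using intY[OF cm2[OF that]] EY[OF cm2[OF that]] pim_mom(1,2)[OF sy'p that] that
    by (simp add: EYY_def sy'_def)
  have mX: "integrable M (\<lambda>\<omega>. X \<omega> i) \<and> (\<integral>\<omega>. X \<omega> i \<partial>M) = mux i" if "i < D" for i
    using intX[OF cm1[OF that]] EX[OF cm1[OF that]] pim_mom(3,4)[OF sx'p that that] by simp
  have mY: "integrable M (\<lambda>\<omega>. Y \<omega> i) \<and> (\<integral>\<omega>. Y \<omega> i \<partial>M) = muy i" if "i < D" for i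
    using intY[OF cm1[OF that]] EY[OF cm1[OF that]] pim_mom(3,4)[OF sy'p that that] by simp
  have mXY4: "integrable M (\<lambda>\<omega>. (X \<omega> i * X \<omega> j) * (Y \<omega> i * Y \<omega> j)) \<and>
      (\<integral>\<omega>. (X \<omega> i * X \<omega> j) * (Y \<omega> i * Y \<omega> j) \<partial>M) = EXX i j * EYY i j"
    if "i < D" "j < D" for i j
    using indep_prod[OF cm2[OF that] cm2[OF that]] mXX[OF that] mYY[OF that] by simp
  have mXY2: "integrable M (\<lambda>\<omega>. X \<omega> i * Y \<omega> i) \<and>
      (\<integral>\<omega>. X \<omega> i * Y \<omega> i \<partial>M) = mux i * muy i"
    if "i < D" for i
    using indep_prod[OF cm1[OF that] cm1[OF that]] mX[OF that] mY[OF that] by simp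
  define u where "u \<omega> = (\<Sum>i<D. X \<omega> i * Y \<omega> i) - m" for \<omega>
  have u_eq: "(u \<omega>)^2 = (\<Sum>i<D. \<Sum>j<D. (X \<omega> i * X \<omega> j) * (Y \<omega> i * Y \<omega> j))
        - 2 * m * (\<Sum>i<D. X \<omega> i * Y \<omega> i) + m^2" for \<omega>
  proof -
    have "(\<Sum>i<D. X \<omega> i * Y \<omega> i) * (\<Sum>i<D. X \<omega> i * Y \<omega> i)
        = (\<Sum>i<D. \<Sum>j<D. (X \<omega> i * X \<omega> j) * (Y \<omega> i * Y \<omega> j))"
      by (simp add: sum_product algebra_simps)
    then show ?thesis unfolding u_def by (simp add: power2_eq_square algebra_simps)
  qed
  have i4: "integrable M (\<lambda>\<omega>. \<Sum>i<D. \<Sum>j<D. (X \<omega> i * X \<omega> j) * (Y \<omega> i * Y \<omega> j))"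
    by (intro Bochner_Integration.integrable_sum) (use mXY4 in auto)
  have i2: "integrable M (\<lambda>\<omega>. \<Sum>i<D. X \<omega> i * Y \<omega> i)"
    by (intro Bochner_Integration.integrable_sum) (use mXY2 in auto)
  have e4: "(\<integral>\<omega>. (\<Sum>i<D. \<Sum>j<D. (X \<omega> i * X \<omega> j) * (Y \<omega> i * Y \<omega> j)) \<partial>M)
      = (\<Sum>i<D. \<Sum>j<D. EXX i j * EYY i j)"
  proof -
    have "(\<integral>\<omega>. (\<Sum>i<D. \<Sum>j<D. (X \<omega> i * X \<omega> j) * (Y \<omega> i * Y \<omega> j)) \<partial>M)
       = (\<Sum>i<D. (\<integral>\<omega>. (\<Sum>j<D. (X \<omega> i * X \<omega> j) * (Y \<omega> i * Y \<omega> j)) \<partial>M))"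
      by (rule Bochner_Integration.integral_sum) (intro Bochner_Integration.integrable_sum, use mXY4 in auto)
    also have "\<dots> = (\<Sum>i<D. \<Sum>j<D. (\<integral>\<omega>. (X \<omega> i * X \<omega> j) * (Y \<omega> i * Y \<omega> j) \<partial>M))"
      by (rule sum.cong[OF refl], rule Bochner_Integration.integral_sum) (use mXY4 in auto)
    also have "\<dots> = (\<Sum>i<D. \<Sum>j<D. EXX i j * EYY i j)"
      by (intro sum.cong refl) (use mXY4 in auto)
    finally show ?thesis .
  qed
  have e2: "(\<integral>\<omega>. (\<Sum>i<D. X \<omega> i * Y \<omega> i) \<partial>M) = m"
  proof -
    have "(\<integral>\<omega>. (\<Sum>i<D. X \<omega> i * Y \<omega> i) \<partial>M) = (\<Sum>i<D. (\<integral>\<omega>. X \<omega> i * Y \<omega> i \<partial>M))"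
      by (rule Bochner_Integration.integral_sum) (use mXY2 in auto)
    also have "\<dots> = m" unfolding m_def by (intro sum.cong refl) (use mXY2 in auto)
    finally show ?thesis .
  qed
  have sumid: "(\<Sum>i<D. \<Sum>j<D. EXX i j * EYY i j) = m^2 + V"
  proof -
    have t: "EXX i j * EYY i j = (mux i * muy i) * (mux j * muy j)
      + (if i = j then (sx i)\<^sup>2 * (sy i)\<^sup>2 + (sy i)\<^sup>2 * (mux i)\<^sup>2 + (sx i)\<^sup>2 * (muy i)\<^sup>2 else 0)" for i j
      unfolding EXX_def EYY_def by (cases "i = j") (simp_all add: algebra_simps power2_eq_square)
    have "(\<Sum>i<D. \<Sum>j<D. EXX i j * EYY i j) = (\<Sum>i<D. \<Sum>j<D. (mux i * muy i) * (mux j * muy j))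
        + (\<Sum>i<D. \<Sum>j<D. (if i = j then (sx i)\<^sup>2 * (sy i)\<^sup>2 + (sy i)\<^sup>2 * (mux i)\<^sup>2 + (sx i)\<^sup>2 * (muy i)\<^sup>2 else 0))"
      unfolding t by (simp add: sum.distrib)
    also have "(\<Sum>i<D. \<Sum>j<D. (mux i * muy i) * (mux j * muy j)) = m^2"
      unfolding m_def power2_eq_square by (simp add: sum_product)
    also have "(\<Sum>i<D. \<Sum>j<D. (if i = j then (sx i)\<^sup>2 * (sy i)\<^sup>2 + (sy i)\<^sup>2 * (mux i)\<^sup>2 + (sx i)\<^sup>2 * (muy i)\<^sup>2 else 0)) = V"
      unfolding V_def by simp
    finally show ?thesis .
  qed
  have iu: "integrable M (\<lambda>\<omega>. (u \<omega>)^2)"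
    unfolding u_eq using i4 i2 by auto
  have eu: "(\<integral>\<omega>. (u \<omega>)^2 \<partial>M) = V"
    unfolding u_eq using i4 i2 e4 e2 sumid prob_space
    by (simp add: Bochner_Integration.integral_diff Bochner_Integration.integral_add power2_eq_square)
  have m2pos: "0 < m^2" using mne by simp
  have markov: "prob {\<omega> \<in> space M. m^2 \<le> (u \<omega>)^2} \<le> V / m^2"
    using integral_Markov_inequality_measure[OF iu sets.top _ m2pos] eu by simp
  define s where "s = sgn m"
  define Bset where "Bset = {\<omega> \<in> space M. sgn (\<Sum>i<D. X \<omega> i * Y \<omega> i) \<noteq> s}"
  have Bsub: "Bset \<subseteq> {\<omega> \<in> space M. m^2 \<le> (u \<omega>)^2}"
  proof safe
    fix \<omega> assume "\<omega> \<in> Bset"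
    then have "sgn (\<Sum>i<D. X \<omega> i * Y \<omega> i) \<noteq> sgn m" unfolding Bset_def s_def by auto
    then have "\<bar>m\<bar> \<le> \<bar>u \<omega>\<bar>" unfolding u_def using mne
      by (auto simp: sgn_if split: if_splits)
    then show "m^2 \<le> (u \<omega>)^2" by (simp add: abs_le_square_iff)
  qed (auto simp: Bset_def)
  have uM: "(\<lambda>\<omega>. (u \<omega>)^2) \<in> borel_measurable M" using iu by auto
  have Bev: "Bset \<in> events" unfolding Bset_def by measurable
  have probB: "prob Bset \<le> 1/25"
  proof -
    have "{\<omega> \<in> space M. m^2 \<le> (u \<omega>)^2} \<in> events" using uM by measurable
    then have "prob Bset \<le> prob {\<omega> \<in> space M. m^2 \<le> (u \<omega>)^2}"
      using Bsub by (intro finite_measure_mono) auto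
    then show ?thesis using markov Vle by linarith
  qed

  define r where "r = (\<lambda>x::nat\<Rightarrow>real. \<lambda>i\<in>{..<D}. 2*mux i - x i)"
  have rm[measurable]: "r \<in> measurable (vec_space D) (vec_space D)"
    unfolding r_def by measurable
  define X' where "X' = (\<lambda>\<omega>. r (X \<omega>))"
  have X'm[measurable]: "X' \<in> measurable M (vec_space D)"
    unfolding X'_def by measurable
  have dX': "distr M (vec_space D) X' = distr M (vec_space D) X"
  proof -
    have "distr M (vec_space D) X' = distr (distr M (vec_space D) X) (vec_space D) r"
      by (subst distr_distr[OF rm Xm]) (simp add: X'_def comp_def)
    also have "\<dots> = distr M (vec_space D) X"
      unfolding dX r_def by (rule pim_refl[OF sx'p])
    finally show ?thesis .
  qed
  have ind': "indep_var (vec_space D) X' (vec_space D) Y"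
  proof -
    have "indep_var (vec_space D) (r \<circ> X) (vec_space D) ((\<lambda>y. y) \<circ> Y)"
      by (rule indep_var_compose[OF assms(9) rm]) simp
    then show ?thesis by (simp add: X'_def comp_def)
  qed
  have joint: "distr M (vec_space D \<Otimes>\<^sub>M vec_space D) (\<lambda>\<omega>. (X' \<omega>, Y \<omega>))
      = distr M (vec_space D \<Otimes>\<^sub>M vec_space D) (\<lambda>\<omega>. (X \<omega>, Y \<omega>))"
    using ind' assms(9) dX' unfolding indep_var_distribution_eq by metis
  define Tf where "Tf p = (\<Sum>i<D. ((fst p i - mux i) / sx i) * ((snd p i - muy i) / sy i))" for p :: "(nat \<Rightarrow> real) \<times> (nat \<Rightarrow> real)"
  have Tfm[measurable]: "Tf \<in> borel_measurable (vec_space D \<Otimes>\<^sub>M vec_space D)"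
    unfolding Tf_def by measurable
  define T where "T \<omega> = (\<Sum>i<D. ((X \<omega> i - mux i) / sx i) * ((Y \<omega> i - muy i) / sy i))" for \<omega>
  have TX: "Tf (X \<omega>, Y \<omega>) = T \<omega>" for \<omega> unfolding Tf_def T_def by simp
  have TX': "Tf (X' \<omega>, Y \<omega>) = - T \<omega>" for \<omega>
  proof -
    have "Tf (X' \<omega>, Y \<omega>) = (\<Sum>i<D. - (((X \<omega> i - mux i) / sx i) * ((Y \<omega> i - muy i) / sy i)))"
      unfolding Tf_def X'_def r_def
    proof (intro sum.cong refl)
      fix i assume "i \<in> {..<D}"
      have e: "2 * mux i - X \<omega> i - mux i = - (X \<omega> i - mux i)" by simp
      show "((fst (\<lambda>i\<in>{..<D}. 2 * mux i - X \<omega> i, Y \<omega>) i - mux i) / sx i) * ((snd (\<lambda>i\<in>{..<D}. 2 * mux i - X \<omega> i, Y \<omega>) i - muy i) / sy i)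
          = - (((X \<omega> i - mux i) / sx i) * ((Y \<omega> i - muy i) / sy i))"
        using \<open>i \<in> {..<D}\<close> by (simp only: fst_conv snd_conv restrict_apply' e minus_divide_left mult_minus_left)
    qed
    then show ?thesis unfolding T_def by (simp add: sum_negf)
  qed
  have symm: "prob {\<omega> \<in> space M. sgn (T \<omega>) = t} = prob {\<omega> \<in> space M. sgn (T \<omega>) = - t}" for t :: real
  proof -
    define At where "At = {p \<in> space (vec_space D \<Otimes>\<^sub>M vec_space D). sgn (Tf p) = t}"
    have Atm: "At \<in> sets (vec_space D \<Otimes>\<^sub>M vec_space D)" unfolding At_def by measurable
    have XYm: "(\<lambda>\<omega>. (X \<omega>, Y \<omega>)) \<in> measurable M (vec_space D \<Otimes>\<^sub>M vec_space D)" by measurable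
    have XYm': "(\<lambda>\<omega>. (X' \<omega>, Y \<omega>)) \<in> measurable M (vec_space D \<Otimes>\<^sub>M vec_space D)" by measurable
    have "prob {\<omega> \<in> space M. sgn (T \<omega>) = t} = measure (distr M (vec_space D \<Otimes>\<^sub>M vec_space D) (\<lambda>\<omega>. (X \<omega>, Y \<omega>))) At"
      unfolding measure_distr[OF XYm Atm]
      by (rule arg_cong[where f="prob"]) (auto simp: At_def TX space_pair_measure measurable_space[OF Xm] measurable_space[OF Ym])
    also have "\<dots> = measure (distr M (vec_space D \<Otimes>\<^sub>M vec_space D) (\<lambda>\<omega>. (X' \<omega>, Y \<omega>))) At"
      unfolding joint ..
    also have "\<dots> = prob {\<omega> \<in> space M. sgn (T \<omega>) = - t}"
      unfolding measure_distr[OF XYm' Atm]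
      by (rule arg_cong[where f="prob"]) (auto simp: At_def TX' space_pair_measure measurable_space[OF X'm] measurable_space[OF Ym] sgn_minus)
    finally show ?thesis .
  qed
  have Tm[measurable]: "T \<in> borel_measurable M" unfolding T_def by measurable
  define Aset where "Aset = {\<omega> \<in> space M. sgn (T \<omega>) \<noteq> s}"
  have sne: "s \<noteq> 0" "- s \<noteq> s" unfolding s_def using mne by (auto simp: sgn_if)
  have Aev: "Aset \<in> events" unfolding Aset_def by measurable
  have probA: "prob Aset \<ge> 1/2"
  proof -
    have c: "space M - Aset = {\<omega> \<in> space M. sgn (T \<omega>) = s}" unfolding Aset_def by auto
    have "prob {\<omega> \<in> space M. sgn (T \<omega>) = s} = 1 - prob Aset"
      using prob_compl[OF Aev] c by simp
    moreover have "prob {\<omega> \<in> space M. sgn (T \<omega>) = - s} \<le> prob Aset"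
      unfolding Aset_def using sne by (intro finite_measure_mono) (auto, measurable)
    ultimately show ?thesis using symm[of s] by linarith
  qed
  define Eset where "Eset = {\<omega> \<in> space M. sgn (\<Sum>i<D. X \<omega> i * Y \<omega> i)
            \<noteq> sgn (\<Sum>i<D. ((X \<omega> i - mux i) / sx i) * ((Y \<omega> i - muy i) / sy i))}"
  have Eev: "Eset \<in> events" unfolding Eset_def by measurable
  have sub: "Aset \<subseteq> Eset \<union> Bset" unfolding Aset_def Bset_def Eset_def T_def by auto
  have "prob Aset \<le> prob (Eset \<union> Bset)" using sub Eev Bev by (intro finite_measure_mono) auto
  also have "\<dots> \<le> prob Eset + prob Bset" using Eev Bev by (rule measure_Un_le)
  finally have "prob Eset \<ge> 1/2 - 1/25" using probA probB by linarith
  then show ?thesis unfolding Eset_def by simp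
qed
end
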